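(* Let $A, C, D$ be binary random variables, with $A$ taking values $a,\overline{a}$, $C$ taking values $c,\overline{c}$, $D$ taking values $d,\overline{d}$, and let $Y$ be a real random variable with finite expectation. Suppose the joint distribution factorizes as \[ p(A,C,D,Y)=p(C)\,p(D\mid C)\,p(A\mid C)\,p(Y\mid A,C), \] and that every event $\{A=x, C=y, D=z\}$ has positive probability. Let $p(c)=0.5$, $p(d\mid c)=p(\overline{d}\mid\overline{c})\ge 0.5$ and $p(\overline{a}\mid\overline{c})\ge p(a\mid c)\ge 0.5$. If \[ E[Y|a,c]-E[Y|a,\overline{c}]\ \ge\ E[Y|\overline{a},\overline{c}]-E[Y|\overline{a},c]\ \ge\ 0, \] then $RD_{crude}\ge RD_{true}$ and $RD_{obs}\ge RD_{true}$.
   Context: $RD_{true}=E[Y|a,c]p(c)+E[Y|a,\overline{c}]p(\overline{c})-E[Y|\overline{a},c]p(c)-E[Y|\overline{a},\overline{c}]p(\overline{c})$; $RD_{crude}=E[Y|a]-E[Y|\overline{a}]$; $RD_{obs}=E[Y|a,d]p(d)+E[Y|a,\overline{d}]p(\overline{d})-E[Y|\overline{a},d]p(d)-E[Y|\overline{a},\overline{d}]p(\overline{d})$. *)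

theory Defs
  imports "HOL-Probability.Probability"
begin

text \<open>Binary variables are modelled as bool-valued random variables:
  A = True means a, C = True means c, D = True means d.\<close>

definition ev :: "'s measure \<Rightarrow> ('s \<Rightarrow> bool) \<Rightarrow> 's set" where
  "ev M P = {\<omega> \<in> space M. P \<omega>}"

definition pr :: "'s measure \<Rightarrow> ('s \<Rightarrow> bool) \<Rightarrow> real" where
  "pr M P = measure M (ev M P)"

definition condE :: "'s measure \<Rightarrow> ('s \<Rightarrow> real) \<Rightarrow> ('s \<Rightarrow> bool) \<Rightarrow> real" where
  "condE M Y P = (LINT \<omega>|M. indicator (ev M P) \<omega> * Y \<omega>) / pr M P"

definition RD_true :: "'s measure \<Rightarrow> ('s \<Rightarrow> bool) \<Rightarrow> ('s \<Rightarrow> bool) \<Rightarrow> ('s \<Rightarrow> real) \<Rightarrow> real" where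
  "RD_true M A C Y =
     condE M Y (\<lambda>\<omega>. A \<omega> \<and> C \<omega>) * pr M C
   + condE M Y (\<lambda>\<omega>. A \<omega> \<and> \<not> C \<omega>) * pr M (\<lambda>\<omega>. \<not> C \<omega>)
   - condE M Y (\<lambda>\<omega>. \<not> A \<omega> \<and> C \<omega>) * pr M C
   - condE M Y (\<lambda>\<omega>. \<not> A \<omega> \<and> \<not> C \<omega>) * pr M (\<lambda>\<omega>. \<not> C \<omega>)"

definition RD_crude :: "'s measure \<Rightarrow> ('s \<Rightarrow> bool) \<Rightarrow> ('s \<Rightarrow> real) \<Rightarrow> real" where
  "RD_crude M A Y = condE M Y A - condE M Y (\<lambda>\<omega>. \<not> A \<omega>)"

definition RD_obs :: "'s measure \<Rightarrow> ('s \<Rightarrow> bool) \<Rightarrow> ('s \<Rightarrow> bool) \<Rightarrow> ('s \<Rightarrow> real) \<Rightarrow> real" where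
  "RD_obs M A D Y = RD_true M A D Y"

end

theory Submission
  imports Defs
begin

lemma dist_lemma:
  fixes M :: "'s measure" and Y :: "'s \<Rightarrow> real"
  assumes fm: "finite_measure M" and E1: "E1 \<in> sets M" and E2: "E2 \<in> sets M"
    and c1: "c1 \<ge> 0" and c2: "c2 \<ge> 0"
    and Y[measurable]: "Y \<in> borel_measurable M" and iY: "integrable M Y"
    and eq: "\<And>B. B \<in> sets borel \<Longrightarrow> c1 * measure M {\<omega>\<in>E1. Y \<omega> \<in> B} = c2 * measure M {\<omega>\<in>E2. Y \<omega> \<in> B}"
  shows "c1 * (LINT \<omega>|M. indicator E1 \<omega> * Y \<omega>) = c2 * (LINT \<omega>|M. indicator E2 \<omega> * Y \<omega>)"
proof -
  have [measurable]: "E1 \<in> sets M" "E2 \<in> sets M" using E1 E2 by auto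
  have em: "emeasure (distr (density M (\<lambda>\<omega>. ennreal (c * indicator E \<omega>))) borel Y) B
      = ennreal (c * measure M {\<omega>\<in>E. Y \<omega> \<in> B})" if "B \<in> sets borel" "E \<in> sets M" "c \<ge> 0" for B E c
  proof -
    have [measurable]: "B \<in> sets borel" "E \<in> sets M" using that by auto
    have "Y -` B \<inter> space M \<in> sets M" by measurable
    have s: "{\<omega>\<in>E. Y \<omega> \<in> B} = E \<inter> (Y -` B \<inter> space M)" using sets.sets_into_space[OF \<open>E \<in> sets M\<close>] by auto
    have "emeasure (distr (density M (\<lambda>\<omega>. ennreal (c * indicator E \<omega>))) borel Y) B
       = emeasure (density M (\<lambda>\<omega>. ennreal (c * indicator E \<omega>))) (Y -` B \<inter> space M)"
      by (subst emeasure_distr) auto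
    also have "\<dots> = (\<integral>\<^sup>+ x. ennreal (c * indicator E x) * indicator (Y -` B \<inter> space M) x \<partial>M)"
      by (subst emeasure_density) auto
    also have "\<dots> = (\<integral>\<^sup>+ x. ennreal c * indicator {\<omega>\<in>E. Y \<omega> \<in> B} x \<partial>M)"
      by (intro nn_integral_cong) (auto simp: s ennreal_mult split: split_indicator)
    also have "\<dots> = ennreal c * emeasure M {\<omega>\<in>E. Y \<omega> \<in> B}"
      by (subst nn_integral_cmult_indicator) (auto simp: s)
    also have "\<dots> = ennreal (c * measure M {\<omega>\<in>E. Y \<omega> \<in> B})"
      using fm that by (simp add: finite_measure.emeasure_eq_measure s ennreal_mult)
    finally show ?thesis .
  qed
  have D: "distr (density M (\<lambda>\<omega>. ennreal (c1 * indicator E1 \<omega>))) borel Y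
         = distr (density M (\<lambda>\<omega>. ennreal (c2 * indicator E2 \<omega>))) borel Y"
    by (rule measure_eqI) (simp_all add: em E1 E2 c1 c2 eq)
  have I: "integral\<^sup>L (distr (density M (\<lambda>\<omega>. ennreal (c * indicator E \<omega>))) borel Y) (\<lambda>x. x)
      = c * (LINT \<omega>|M. indicator E \<omega> * Y \<omega>)" if "E \<in> sets M" "c \<ge> 0" for E c
  proof -
    have [measurable]: "E \<in> sets M" using that by auto
    have "integral\<^sup>L (distr (density M (\<lambda>\<omega>. ennreal (c * indicator E \<omega>))) borel Y) (\<lambda>x. x)
       = integral\<^sup>L (density M (\<lambda>\<omega>. ennreal (c * indicator E \<omega>))) Y"
      by (subst integral_distr) auto
    also have "\<dots> = (LINT \<omega>|M. (c * indicator E \<omega>) *\<^sub>R Y \<omega>)"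
      using that by (subst integral_density) auto
    also have "\<dots> = c * (LINT \<omega>|M. indicator E \<omega> * Y \<omega>)"
      by (simp add: mult.assoc)
    finally show ?thesis .
  qed
  show ?thesis using I[OF E1 c1] I[OF E2 c2] D by simp
qed


lemma ev_sets: "F \<in> measurable M (count_space UNIV) \<Longrightarrow> ev M F \<in> sets M"
  unfolding ev_def by measurable

lemma pr_split:
  fixes Q F :: "'s \<Rightarrow> bool"
  assumes "prob_space M" "F \<in> measurable M (count_space UNIV)" "Q \<in> measurable M (count_space UNIV)"
  shows "pr M F = (\<Sum>x\<in>UNIV. pr M (\<lambda>\<omega>. F \<omega> \<and> Q \<omega> = x))"
proof -
  interpret prob_space M by fact
  have [measurable]: "F \<in> measurable M (count_space UNIV)" "Q \<in> measurable M (count_space UNIV)" using assms by auto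
  have u: "ev M F = ev M (\<lambda>\<omega>. F \<omega> \<and> Q \<omega> = True) \<union> ev M (\<lambda>\<omega>. F \<omega> \<and> Q \<omega> = False)"
    unfolding ev_def by auto
  have "measure M (ev M F) = measure M (ev M (\<lambda>\<omega>. F \<omega> \<and> Q \<omega> = True)) + measure M (ev M (\<lambda>\<omega>. F \<omega> \<and> Q \<omega> = False))"
    unfolding u by (rule finite_measure_Union) (auto simp: ev_def intro!: ev_sets)
  thus ?thesis unfolding pr_def UNIV_bool by (simp add: add.commute)
qed

definition JJ :: "'s measure \<Rightarrow> ('s \<Rightarrow> real) \<Rightarrow> ('s \<Rightarrow> bool) \<Rightarrow> real" where
  "JJ M Y F = (LINT \<omega>|M. indicator (ev M F) \<omega> * Y \<omega>)"

lemma J_split: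
  fixes Q F :: "'s \<Rightarrow> bool"
  assumes "prob_space M" "F \<in> measurable M (count_space UNIV)" "Q \<in> measurable M (count_space UNIV)" "integrable M Y"
  shows "JJ M Y F = (\<Sum>x\<in>UNIV. JJ M Y (\<lambda>\<omega>. F \<omega> \<and> Q \<omega> = x))"
proof -
  have [measurable]: "F \<in> measurable M (count_space UNIV)" "Q \<in> measurable M (count_space UNIV)" using assms by auto
  have i: "integrable M (\<lambda>\<omega>. indicator (ev M G) \<omega> * Y \<omega>)" if "G \<in> measurable M (count_space UNIV)" for G
    using integrable_mult_indicator[OF ev_sets[OF that] assms(4)] by simp
  have e: "indicator (ev M F) \<omega> * Y \<omega> = indicator (ev M (\<lambda>\<omega>. F \<omega> \<and> Q \<omega>)) \<omega> * Y \<omega> + indicator (ev M (\<lambda>\<omega>. F \<omega> \<and> \<not> Q \<omega>)) \<omega> * Y \<omega>" for \<omega>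
    unfolding ev_def by (auto split: split_indicator)
  show ?thesis unfolding JJ_def UNIV_bool e
    by (simp add: i add.commute)
qed

lemma pr_false: "pr M (\<lambda>\<omega>. False) = 0" unfolding pr_def ev_def by simp
lemma J_false: "JJ M Y (\<lambda>\<omega>. False) = 0" unfolding JJ_def ev_def by simp

lemma pr_atoms:
  fixes A C D :: "'s \<Rightarrow> bool"
  assumes "prob_space M" "A \<in> measurable M (count_space UNIV)" "C \<in> measurable M (count_space UNIV)" "D \<in> measurable M (count_space UNIV)"
  shows "pr M (\<lambda>\<omega>. f (A \<omega>) (C \<omega>) (D \<omega>)) = (\<Sum>x\<in>UNIV. \<Sum>y\<in>UNIV. \<Sum>z\<in>UNIV.
          if f x y z then pr M (\<lambda>\<omega>. A \<omega> = x \<and> C \<omega> = y \<and> D \<omega> = z) else 0)"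
proof -
  have [measurable]: "A \<in> measurable M (count_space UNIV)" "C \<in> measurable M (count_space UNIV)" "D \<in> measurable M (count_space UNIV)" using assms by auto
  have "pr M (\<lambda>\<omega>. f (A \<omega>) (C \<omega>) (D \<omega>)) = (\<Sum>x\<in>UNIV. \<Sum>y\<in>UNIV. \<Sum>z\<in>UNIV.
          pr M (\<lambda>\<omega>. ((f (A \<omega>) (C \<omega>) (D \<omega>) \<and> A \<omega> = x) \<and> C \<omega> = y) \<and> D \<omega> = z))"
    apply (subst pr_split[OF assms(1), of _ A], measurable)
    apply (subst pr_split[OF assms(1), of _ C], measurable)
    apply (subst pr_split[OF assms(1), of _ D], measurable)
    done
  also have "\<dots> = (\<Sum>x\<in>UNIV. \<Sum>y\<in>UNIV. \<Sum>z\<in>UNIV.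
          if f x y z then pr M (\<lambda>\<omega>. A \<omega> = x \<and> C \<omega> = y \<and> D \<omega> = z) else 0)"
  proof (intro sum.cong refl)
    fix x y z
    have "(\<lambda>\<omega>. ((f (A \<omega>) (C \<omega>) (D \<omega>) \<and> A \<omega> = x) \<and> C \<omega> = y) \<and> D \<omega> = z)
       = (\<lambda>\<omega>. if f x y z then A \<omega> = x \<and> C \<omega> = y \<and> D \<omega> = z else False)" by auto
    thus "pr M (\<lambda>\<omega>. ((f (A \<omega>) (C \<omega>) (D \<omega>) \<and> A \<omega> = x) \<and> C \<omega> = y) \<and> D \<omega> = z) =
      (if f x y z then pr M (\<lambda>\<omega>. A \<omega> = x \<and> C \<omega> = y \<and> D \<omega> = z) else 0)"
      by (simp add: pr_false)
  qed
  finally show ?thesis .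
qed

lemma J_atoms:
  fixes A C D :: "'s \<Rightarrow> bool"
  assumes "prob_space M" "integrable M Y" "A \<in> measurable M (count_space UNIV)" "C \<in> measurable M (count_space UNIV)" "D \<in> measurable M (count_space UNIV)"
  shows "JJ M Y (\<lambda>\<omega>. f (A \<omega>) (C \<omega>) (D \<omega>)) = (\<Sum>x\<in>UNIV. \<Sum>y\<in>UNIV. \<Sum>z\<in>UNIV.
          if f x y z then JJ M Y (\<lambda>\<omega>. A \<omega> = x \<and> C \<omega> = y \<and> D \<omega> = z) else 0)"
proof -
  have [measurable]: "A \<in> measurable M (count_space UNIV)" "C \<in> measurable M (count_space UNIV)" "D \<in> measurable M (count_space UNIV)" using assms by auto
  have "JJ M Y (\<lambda>\<omega>. f (A \<omega>) (C \<omega>) (D \<omega>)) = (\<Sum>x\<in>UNIV. \<Sum>y\<in>UNIV. \<Sum>z\<in>UNIV.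
          JJ M Y (\<lambda>\<omega>. ((f (A \<omega>) (C \<omega>) (D \<omega>) \<and> A \<omega> = x) \<and> C \<omega> = y) \<and> D \<omega> = z))"
    apply (subst J_split[OF assms(1) _ _ assms(2), of _ A], measurable)
    apply (subst J_split[OF assms(1) _ _ assms(2), of _ C], measurable)
    apply (subst J_split[OF assms(1) _ _ assms(2), of _ D], measurable)
    done
  also have "\<dots> = (\<Sum>x\<in>UNIV. \<Sum>y\<in>UNIV. \<Sum>z\<in>UNIV.
          if f x y z then JJ M Y (\<lambda>\<omega>. A \<omega> = x \<and> C \<omega> = y \<and> D \<omega> = z) else 0)"
  proof (intro sum.cong refl)
    fix x y z
    have "(\<lambda>\<omega>. ((f (A \<omega>) (C \<omega>) (D \<omega>) \<and> A \<omega> = x) \<and> C \<omega> = y) \<and> D \<omega> = z)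
       = (\<lambda>\<omega>. if f x y z then A \<omega> = x \<and> C \<omega> = y \<and> D \<omega> = z else False)" by auto
    thus "JJ M Y (\<lambda>\<omega>. ((f (A \<omega>) (C \<omega>) (D \<omega>) \<and> A \<omega> = x) \<and> C \<omega> = y) \<and> D \<omega> = z) =
      (if f x y z then JJ M Y (\<lambda>\<omega>. A \<omega> = x \<and> C \<omega> = y \<and> D \<omega> = z) else 0)"
      by (simp add: J_false)
  qed
  finally show ?thesis .
qed


lemma wlem:
  fixes q a r :: real
  assumes "0 < q" "q < 1" "0 < a" "0 < r" "r \<le> a"
  shows "q*a/(q*a+(1-q)*r) + (1-q)*a/((1-q)*a+q*r) \<ge> 1"
proof -
  have d1: "q*a+(1-q)*r > 0" "(1-q)*a+q*r > 0" using assms by (auto intro: add_pos_pos)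
  have "q*r/((1-q)*a+q*r) \<le> q*a/(q*a+(1-q)*r)"
  proof -
    have "r*r \<le> a*a" using assms by (intro mult_mono) auto
    hence "q*(1-q)*(r*r) \<le> q*(1-q)*(a*a)" using assms by (intro mult_left_mono) auto
    hence "q*r*(q*a+(1-q)*r) \<le> q*a*((1-q)*a+q*r)" by (simp add: algebra_simps)
    thus ?thesis using d1 by (simp add: divide_simps)
  qed
  moreover have "(1-q)*a/((1-q)*a+q*r) = 1 - q*r/((1-q)*a+q*r)" using d1 by (simp add: field_simps)
  ultimately show ?thesis by linarith
qed

lemma mono_lem:
  fixes q x y pu pv :: real
  assumes "0 < q" "q < 1" "0 < x" "0 < y" "0 < pu" "0 < pv" "pu * y \<le> x * pv"
  shows "q*pu/(q*pu+(1-q)*pv) \<le> q*x/(q*x+(1-q)*y)"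
proof -
  have d1: "q*pu+(1-q)*pv > 0" "q*x+(1-q)*y > 0" using assms by (auto intro: add_pos_pos)
  have "q*pu*(q*x+(1-q)*y) \<le> q*x*(q*pu+(1-q)*pv)"
  proof -
    have "q*(1-q)*(pu*y) \<le> q*(1-q)*(x*pv)" using assms by (intro mult_left_mono) auto
    thus ?thesis by (simp add: algebra_simps)
  qed
  thus ?thesis using d1 by (simp add: divide_simps)
qed

lemma crude_alg:
  fixes a b y1 y2 y3 y4 :: real
  assumes "1/2 \<le> a" "a \<le> b" "b < 1" "y1 - y2 \<ge> y4 - y3" "y4 - y3 \<ge> 0"
  shows "(a*y1 + (1-b)*y2)/(a+(1-b)) - ((1-a)*y3 + b*y4)/((1-a)+b) \<ge> y1*(1/2) + y2*(1/2) - y3*(1/2) - y4*(1/2)"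
proof -
  have p1: "a+(1-b) > 0" "(1-a)+b > 0" using assms by auto
  have e1: "(a*y1 + (1-b)*y2)/(a+(1-b)) = y1*(1/2) + y2*(1/2) + (a+b-1)/2 * ((y1-y2)/(a+(1-b)))"
    using p1 by (simp add: field_simps)
  have e2: "((1-a)*y3 + b*y4)/((1-a)+b) = y3*(1/2) + y4*(1/2) + (a+b-1)/2 * ((y4-y3)/((1-a)+b))"
    using p1 by (simp add: field_simps)
  have "(y4-y3)/((1-a)+b) \<le> (y4-y3)/(a+(1-b))"
    using p1 assms by (intro divide_left_mono) auto
  also have "\<dots> \<le> (y1-y2)/(a+(1-b))" using p1 assms by (intro divide_right_mono) auto
  finally have "(a+b-1)/2 * ((y4-y3)/((1-a)+b)) \<le> (a+b-1)/2 * ((y1-y2)/(a+(1-b)))"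
    using assms by (intro mult_left_mono) auto
  thus ?thesis unfolding e1 e2 by linarith
qed

lemma obs_alg:
  fixes a b q y1 y2 y3 y4 :: real
  assumes "1/2 \<le> a" "a \<le> b" "b < 1" "1/2 \<le> q" "q < 1" "y1 - y2 \<ge> y4 - y3" "y4 - y3 \<ge> 0"
  shows "(q* a* y1 + (1-q)* (1-b)* y2)/(q* a+(1-q)* (1-b)) * (1/2)
       + ((1-q)* a* y1 + q* (1-b)* y2)/((1-q)* a+q* (1-b)) * (1/2)
       - (q* (1-a)* y3 + (1-q)* b* y4)/(q* (1-a)+(1-q)* b) * (1/2)
       - ((1-q)* (1-a)* y3 + q* b* y4)/((1-q)* (1-a)+q* b) * (1/2)
       \<ge> y1* (1/2) + y2* (1/2) - y3* (1/2) - y4* (1/2)"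
proof -
  define rA where "rA = 1 - b"
  define sA where "sA = 1 - a"
  have pos: "0 < q" "q < 1" "0 < a" "0 < rA" "0 < sA" "0 < b" "rA \<le> a" using assms by (auto simp: rA_def sA_def)
  have d: "q* a+(1-q)* rA > 0" "(1-q)* a+q* rA > 0" "q* sA+(1-q)* b > 0" "(1-q)* sA+q* b > 0"
    using pos by (auto intro!: add_pos_pos)
  define w where "w = q* a/(q* a+(1-q)* rA)"
  define w' where "w' = (1-q)* a/((1-q)* a+q* rA)"
  define zA where "zA = q* sA/(q* sA+(1-q)* b)"
  define zB where "zB = (1-q)* sA/((1-q)* sA+q* b)"
  have E1: "(q* a* y1 + (1-q)* rA* y2)/(q* a+(1-q)* rA) = w* y1 + (1-w)* y2"
  proof -
    have om: "1 - w = (1-q)* rA/(q* a+(1-q)* rA)" using d unfolding w_def by (simp add: field_simps)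
    show ?thesis unfolding om unfolding w_def by (simp add: add_divide_distrib)
  qed
  have E2: "((1-q)* a* y1 + q* rA* y2)/((1-q)* a+q* rA) = w'* y1 + (1-w')* y2"
  proof -
    have om: "1 - w' = q* rA/((1-q)* a+q* rA)" using d unfolding w'_def by (simp add: field_simps)
    show ?thesis unfolding om unfolding w'_def by (simp add: add_divide_distrib)
  qed
  have E3: "(q* sA* y3 + (1-q)* b* y4)/(q* sA+(1-q)* b) = zA* y3 + (1-zA)* y4"
  proof -
    have om: "1 - zA = (1-q)* b/(q* sA+(1-q)* b)" using d unfolding zA_def by (simp add: field_simps)
    show ?thesis unfolding om unfolding zA_def by (simp add: add_divide_distrib)
  qed
  have E4: "((1-q)* sA* y3 + q* b* y4)/((1-q)* sA+q* b) = zB* y3 + (1-zB)* y4"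
  proof -
    have om: "1 - zB = q* b/((1-q)* sA+q* b)" using d unfolding zB_def by (simp add: field_simps)
    show ?thesis unfolding om unfolding zB_def by (simp add: add_divide_distrib)
  qed
  have W: "w + w' - 1 \<ge> 0" using wlem[OF pos(1,2,3,4,7)] unfolding w_def w'_def by linarith
  have br: "b* rA \<le> a* sA"
  proof -
    have "b* rA = b - b* b" "a* sA = a - a* a" by (simp_all add: rA_def sA_def algebra_simps)
    moreover have "(b - a)* (a + b - 1) \<ge> 0" using assms by (intro mult_nonneg_nonneg) auto
    ultimately show ?thesis by (simp add: algebra_simps)
  qed
  have m1: "q* b/(q* b+(1-q)* sA) \<le> w" unfolding w_def
    using pos br by (intro mono_lem) (auto simp: mult.commute)
  have m2: "(1-q)* b/((1-q)* b+(1-(1-q))* sA) \<le> (1-q)* a/((1-q)* a+(1-(1-q))* rA)"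
    using pos br by (intro mono_lem) (auto simp: mult.commute)
  have c1: "1 - zB = q* b/(q* b+(1-q)* sA)" using d unfolding zB_def by (simp add: field_simps)
  have c2: "1 - zA = (1-q)* b/((1-q)* b+(1-(1-q))* sA)" using d unfolding zA_def by (simp add: field_simps)
  have WU: "(w + w' - 1) + (zA + zB - 1) \<ge> 0" using m1 m2 c1 c2 unfolding w'_def by simp
  have "(w + w' - 1) * (y4 - y3) \<le> (w + w' - 1) * (y1 - y2)" using W assms by (intro mult_left_mono) auto
  moreover have "((w + w' - 1) + (zA + zB - 1)) * (y4 - y3) \<ge> 0" using WU assms by simp
  ultimately have key: "(w + w' - 1) * (y1 - y2) + (zA + zB - 1) * (y4 - y3) \<ge> 0"
    by (simp add: algebra_simps)
  show ?thesis
    unfolding rA_def[symmetric] sA_def[symmetric] E1 E2 E3 E4 using key by (simp add: algebra_simps add_divide_distrib diff_divide_distrib)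
qed


theorem theorem4:
  fixes M :: "'s measure" and A C D :: "'s \<Rightarrow> bool" and Y :: "'s \<Rightarrow> real"
  assumes "prob_space M"
    and "A \<in> measurable M (count_space UNIV)"
    and "C \<in> measurable M (count_space UNIV)"
    and "D \<in> measurable M (count_space UNIV)"
    and "Y \<in> borel_measurable M" and "integrable M Y"
    and factor: "\<And>x y z B. B \<in> sets borel \<Longrightarrow>
        pr M (\<lambda>\<omega>. A \<omega> = x \<and> C \<omega> = y \<and> D \<omega> = z \<and> Y \<omega> \<in> B) * pr M (\<lambda>\<omega>. C \<omega> = y)
      = pr M (\<lambda>\<omega>. C \<omega> = y \<and> D \<omega> = z) * pr M (\<lambda>\<omega>. A \<omega> = x \<and> C \<omega> = y \<and> Y \<omega> \<in> B)"
    and pos: "\<And>x y z. pr M (\<lambda>\<omega>. A \<omega> = x \<and> C \<omega> = y \<and> D \<omega> = z) > 0"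
    and pc: "pr M C = 1/2"
    and pd: "pr M (\<lambda>\<omega>. C \<omega> \<and> D \<omega>) / pr M C
             = pr M (\<lambda>\<omega>. \<not> C \<omega> \<and> \<not> D \<omega>) / pr M (\<lambda>\<omega>. \<not> C \<omega>)"
    and pd2: "pr M (\<lambda>\<omega>. C \<omega> \<and> D \<omega>) / pr M C \<ge> 1/2"
    and pa: "pr M (\<lambda>\<omega>. \<not> A \<omega> \<and> \<not> C \<omega>) / pr M (\<lambda>\<omega>. \<not> C \<omega>)
             \<ge> pr M (\<lambda>\<omega>. A \<omega> \<and> C \<omega>) / pr M C"
    and pa2: "pr M (\<lambda>\<omega>. A \<omega> \<and> C \<omega>) / pr M C \<ge> 1/2"
    and ey: "condE M Y (\<lambda>\<omega>. A \<omega> \<and> C \<omega>) - condE M Y (\<lambda>\<omega>. A \<omega> \<and> \<not> C \<omega>)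
             \<ge> condE M Y (\<lambda>\<omega>. \<not> A \<omega> \<and> \<not> C \<omega>) - condE M Y (\<lambda>\<omega>. \<not> A \<omega> \<and> C \<omega>)"
    and ey2: "condE M Y (\<lambda>\<omega>. \<not> A \<omega> \<and> \<not> C \<omega>) - condE M Y (\<lambda>\<omega>. \<not> A \<omega> \<and> C \<omega>) \<ge> 0"
  shows "RD_crude M A Y \<ge> RD_true M A C Y \<and> RD_obs M A D Y \<ge> RD_true M A C Y"
proof -
  interpret prob_space M by (rule assms(1))
  note meas[measurable] = assms(2-5)
  have fm: "finite_measure M" using assms(1) unfolding prob_space_def by blast
  have PRA: "pr M (\<lambda>\<omega>. f (A \<omega>) (C \<omega>) (D \<omega>)) = (\<Sum>x\<in>UNIV. \<Sum>y\<in>UNIV. \<Sum>z\<in>UNIV.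
          if f x y z then pr M (\<lambda>\<omega>. A \<omega> = x \<and> C \<omega> = y \<and> D \<omega> = z) else 0)" for f
    by (rule pr_atoms[OF assms(1-4)])
  have JA: "JJ M Y (\<lambda>\<omega>. f (A \<omega>) (C \<omega>) (D \<omega>)) = (\<Sum>x\<in>UNIV. \<Sum>y\<in>UNIV. \<Sum>z\<in>UNIV.
          if f x y z then JJ M Y (\<lambda>\<omega>. A \<omega> = x \<and> C \<omega> = y \<and> D \<omega> = z) else 0)" for f
    by (rule J_atoms[OF assms(1) assms(6) assms(2-4)])
  have prnn: "pr M F \<ge> 0" for F unfolding pr_def by simp
  have FJ: "pr M (\<lambda>\<omega>. C \<omega> = y) * JJ M Y (\<lambda>\<omega>. A \<omega> = x \<and> C \<omega> = y \<and> D \<omega> = z)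
      = pr M (\<lambda>\<omega>. C \<omega> = y \<and> D \<omega> = z) * JJ M Y (\<lambda>\<omega>. A \<omega> = x \<and> C \<omega> = y)" for x y z
    unfolding JJ_def
  proof (rule dist_lemma[OF fm _ _ prnn prnn assms(5) assms(6)])
    show "ev M (\<lambda>\<omega>. A \<omega> = x \<and> C \<omega> = y \<and> D \<omega> = z) \<in> sets M" by (rule ev_sets) measurable
    show "ev M (\<lambda>\<omega>. A \<omega> = x \<and> C \<omega> = y) \<in> sets M" by (rule ev_sets) measurable
    fix B :: "real set" assume B: "B \<in> sets borel"
    have e1: "{\<omega> \<in> ev M (\<lambda>\<omega>. A \<omega> = x \<and> C \<omega> = y \<and> D \<omega> = z). Y \<omega> \<in> B}
       = ev M (\<lambda>\<omega>. A \<omega> = x \<and> C \<omega> = y \<and> D \<omega> = z \<and> Y \<omega> \<in> B)" unfolding ev_def by auto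
    have e2: "{\<omega> \<in> ev M (\<lambda>\<omega>. A \<omega> = x \<and> C \<omega> = y). Y \<omega> \<in> B}
       = ev M (\<lambda>\<omega>. A \<omega> = x \<and> C \<omega> = y \<and> Y \<omega> \<in> B)" unfolding ev_def by auto
    show "pr M (\<lambda>\<omega>. C \<omega> = y) * measure M {\<omega> \<in> ev M (\<lambda>\<omega>. A \<omega> = x \<and> C \<omega> = y \<and> D \<omega> = z). Y \<omega> \<in> B}
      = pr M (\<lambda>\<omega>. C \<omega> = y \<and> D \<omega> = z) * measure M {\<omega> \<in> ev M (\<lambda>\<omega>. A \<omega> = x \<and> C \<omega> = y). Y \<omega> \<in> B}"
      unfolding e1 e2 using factor[OF B, of x y z] unfolding pr_def by (simp add: mult.commute)
  qed
  have FP: "pr M (\<lambda>\<omega>. C \<omega> = y) * pr M (\<lambda>\<omega>. A \<omega> = x \<and> C \<omega> = y \<and> D \<omega> = z)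
      = pr M (\<lambda>\<omega>. C \<omega> = y \<and> D \<omega> = z) * pr M (\<lambda>\<omega>. A \<omega> = x \<and> C \<omega> = y)" for x y z
    using factor[of UNIV x y z] by (simp add: mult.commute)
  have cond: "condE M Y F = JJ M Y F / pr M F" for F unfolding condE_def JJ_def ..
  define p111 where "p111 = pr M (\<lambda>\<omega>. A \<omega> \<and> C \<omega> \<and> D \<omega>)"
  define j111 where "j111 = JJ M Y (\<lambda>\<omega>. A \<omega> \<and> C \<omega> \<and> D \<omega>)"
  define p110 where "p110 = pr M (\<lambda>\<omega>. A \<omega> \<and> C \<omega> \<and> \<not> D \<omega>)"
  define j110 where "j110 = JJ M Y (\<lambda>\<omega>. A \<omega> \<and> C \<omega> \<and> \<not> D \<omega>)"
  define p101 where "p101 = pr M (\<lambda>\<omega>. A \<omega> \<and> \<not> C \<omega> \<and> D \<omega>)"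
  define j101 where "j101 = JJ M Y (\<lambda>\<omega>. A \<omega> \<and> \<not> C \<omega> \<and> D \<omega>)"
  define p100 where "p100 = pr M (\<lambda>\<omega>. A \<omega> \<and> \<not> C \<omega> \<and> \<not> D \<omega>)"
  define j100 where "j100 = JJ M Y (\<lambda>\<omega>. A \<omega> \<and> \<not> C \<omega> \<and> \<not> D \<omega>)"
  define p011 where "p011 = pr M (\<lambda>\<omega>. \<not> A \<omega> \<and> C \<omega> \<and> D \<omega>)"
  define j011 where "j011 = JJ M Y (\<lambda>\<omega>. \<not> A \<omega> \<and> C \<omega> \<and> D \<omega>)"
  define p010 where "p010 = pr M (\<lambda>\<omega>. \<not> A \<omega> \<and> C \<omega> \<and> \<not> D \<omega>)"
  define j010 where "j010 = JJ M Y (\<lambda>\<omega>. \<not> A \<omega> \<and> C \<omega> \<and> \<not> D \<omega>)"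
  define p001 where "p001 = pr M (\<lambda>\<omega>. \<not> A \<omega> \<and> \<not> C \<omega> \<and> D \<omega>)"
  define j001 where "j001 = JJ M Y (\<lambda>\<omega>. \<not> A \<omega> \<and> \<not> C \<omega> \<and> D \<omega>)"
  define p000 where "p000 = pr M (\<lambda>\<omega>. \<not> A \<omega> \<and> \<not> C \<omega> \<and> \<not> D \<omega>)"
  define j000 where "j000 = JJ M Y (\<lambda>\<omega>. \<not> A \<omega> \<and> \<not> C \<omega> \<and> \<not> D \<omega>)"
  note pdefs = p111_def j111_def p110_def j110_def p101_def j101_def p100_def j100_def p011_def j011_def p010_def j010_def p001_def j001_def p000_def j000_def
  have pr_C: "pr M C = p111 + p110 + p011 + p010"
    using PRA[of "\<lambda>a c d. c"] by (simp add: UNIV_bool pdefs algebra_simps)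
  have J_C: "JJ M Y C = j111 + j110 + j011 + j010"
    using JA[of "\<lambda>a c d. c"] by (simp add: UNIV_bool pdefs algebra_simps)
  have pr_nC: "pr M (\<lambda>\<omega>. \<not> C \<omega>) = p101 + p100 + p001 + p000"
    using PRA[of "\<lambda>a c d. \<not> c"] by (simp add: UNIV_bool pdefs algebra_simps)
  have J_nC: "JJ M Y (\<lambda>\<omega>. \<not> C \<omega>) = j101 + j100 + j001 + j000"
    using JA[of "\<lambda>a c d. \<not> c"] by (simp add: UNIV_bool pdefs algebra_simps)
  have pr_D: "pr M D = p111 + p101 + p011 + p001"
    using PRA[of "\<lambda>a c d. d"] by (simp add: UNIV_bool pdefs algebra_simps)
  have J_D: "JJ M Y D = j111 + j101 + j011 + j001"
    using JA[of "\<lambda>a c d. d"] by (simp add: UNIV_bool pdefs algebra_simps)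
  have pr_nD: "pr M (\<lambda>\<omega>. \<not> D \<omega>) = p110 + p100 + p010 + p000"
    using PRA[of "\<lambda>a c d. \<not> d"] by (simp add: UNIV_bool pdefs algebra_simps)
  have J_nD: "JJ M Y (\<lambda>\<omega>. \<not> D \<omega>) = j110 + j100 + j010 + j000"
    using JA[of "\<lambda>a c d. \<not> d"] by (simp add: UNIV_bool pdefs algebra_simps)
  have pr_A: "pr M A = p111 + p110 + p101 + p100"
    using PRA[of "\<lambda>a c d. a"] by (simp add: UNIV_bool pdefs algebra_simps)
  have J_A: "JJ M Y A = j111 + j110 + j101 + j100"
    using JA[of "\<lambda>a c d. a"] by (simp add: UNIV_bool pdefs algebra_simps)
  have pr_nA: "pr M (\<lambda>\<omega>. \<not> A \<omega>) = p011 + p010 + p001 + p000"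
    using PRA[of "\<lambda>a c d. \<not> a"] by (simp add: UNIV_bool pdefs algebra_simps)
  have J_nA: "JJ M Y (\<lambda>\<omega>. \<not> A \<omega>) = j011 + j010 + j001 + j000"
    using JA[of "\<lambda>a c d. \<not> a"] by (simp add: UNIV_bool pdefs algebra_simps)
  have pr_T: "pr M (\<lambda>\<omega>. True) = p111 + p110 + p101 + p100 + p011 + p010 + p001 + p000"
    using PRA[of "\<lambda>a c d. True"] by (simp add: UNIV_bool pdefs algebra_simps)
  have pr_AC: "pr M (\<lambda>\<omega>. A \<omega> \<and> C \<omega>) = p111 + p110"
    using PRA[of "\<lambda>a c d. a \<and> c"] by (simp add: UNIV_bool pdefs algebra_simps)
  have J_AC: "JJ M Y (\<lambda>\<omega>. A \<omega> \<and> C \<omega>) = j111 + j110"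
    using JA[of "\<lambda>a c d. a \<and> c"] by (simp add: UNIV_bool pdefs algebra_simps)
  have pr_AnC: "pr M (\<lambda>\<omega>. A \<omega> \<and> \<not> C \<omega>) = p101 + p100"
    using PRA[of "\<lambda>a c d. a \<and> \<not> c"] by (simp add: UNIV_bool pdefs algebra_simps)
  have J_AnC: "JJ M Y (\<lambda>\<omega>. A \<omega> \<and> \<not> C \<omega>) = j101 + j100"
    using JA[of "\<lambda>a c d. a \<and> \<not> c"] by (simp add: UNIV_bool pdefs algebra_simps)
  have pr_AD: "pr M (\<lambda>\<omega>. A \<omega> \<and> D \<omega>) = p111 + p101"
    using PRA[of "\<lambda>a c d. a \<and> d"] by (simp add: UNIV_bool pdefs algebra_simps)
  have J_AD: "JJ M Y (\<lambda>\<omega>. A \<omega> \<and> D \<omega>) = j111 + j101"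
    using JA[of "\<lambda>a c d. a \<and> d"] by (simp add: UNIV_bool pdefs algebra_simps)
  have pr_AnD: "pr M (\<lambda>\<omega>. A \<omega> \<and> \<not> D \<omega>) = p110 + p100"
    using PRA[of "\<lambda>a c d. a \<and> \<not> d"] by (simp add: UNIV_bool pdefs algebra_simps)
  have J_AnD: "JJ M Y (\<lambda>\<omega>. A \<omega> \<and> \<not> D \<omega>) = j110 + j100"
    using JA[of "\<lambda>a c d. a \<and> \<not> d"] by (simp add: UNIV_bool pdefs algebra_simps)
  have pr_nAC: "pr M (\<lambda>\<omega>. \<not> A \<omega> \<and> C \<omega>) = p011 + p010"
    using PRA[of "\<lambda>a c d. \<not> a \<and> c"] by (simp add: UNIV_bool pdefs algebra_simps)
  have J_nAC: "JJ M Y (\<lambda>\<omega>. \<not> A \<omega> \<and> C \<omega>) = j011 + j010"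
    using JA[of "\<lambda>a c d. \<not> a \<and> c"] by (simp add: UNIV_bool pdefs algebra_simps)
  have pr_nAnC: "pr M (\<lambda>\<omega>. \<not> A \<omega> \<and> \<not> C \<omega>) = p001 + p000"
    using PRA[of "\<lambda>a c d. \<not> a \<and> \<not> c"] by (simp add: UNIV_bool pdefs algebra_simps)
  have J_nAnC: "JJ M Y (\<lambda>\<omega>. \<not> A \<omega> \<and> \<not> C \<omega>) = j001 + j000"
    using JA[of "\<lambda>a c d. \<not> a \<and> \<not> c"] by (simp add: UNIV_bool pdefs algebra_simps)
  have pr_nAD: "pr M (\<lambda>\<omega>. \<not> A \<omega> \<and> D \<omega>) = p011 + p001"
    using PRA[of "\<lambda>a c d. \<not> a \<and> d"] by (simp add: UNIV_bool pdefs algebra_simps)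
  have J_nAD: "JJ M Y (\<lambda>\<omega>. \<not> A \<omega> \<and> D \<omega>) = j011 + j001"
    using JA[of "\<lambda>a c d. \<not> a \<and> d"] by (simp add: UNIV_bool pdefs algebra_simps)
  have pr_nAnD: "pr M (\<lambda>\<omega>. \<not> A \<omega> \<and> \<not> D \<omega>) = p010 + p000"
    using PRA[of "\<lambda>a c d. \<not> a \<and> \<not> d"] by (simp add: UNIV_bool pdefs algebra_simps)
  have J_nAnD: "JJ M Y (\<lambda>\<omega>. \<not> A \<omega> \<and> \<not> D \<omega>) = j010 + j000"
    using JA[of "\<lambda>a c d. \<not> a \<and> \<not> d"] by (simp add: UNIV_bool pdefs algebra_simps)
  have pr_CD: "pr M (\<lambda>\<omega>. C \<omega> \<and> D \<omega>) = p111 + p011"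
    using PRA[of "\<lambda>a c d. c \<and> d"] by (simp add: UNIV_bool pdefs algebra_simps)
  have J_CD: "JJ M Y (\<lambda>\<omega>. C \<omega> \<and> D \<omega>) = j111 + j011"
    using JA[of "\<lambda>a c d. c \<and> d"] by (simp add: UNIV_bool pdefs algebra_simps)
  have pr_CnD: "pr M (\<lambda>\<omega>. C \<omega> \<and> \<not> D \<omega>) = p110 + p010"
    using PRA[of "\<lambda>a c d. c \<and> \<not> d"] by (simp add: UNIV_bool pdefs algebra_simps)
  have J_CnD: "JJ M Y (\<lambda>\<omega>. C \<omega> \<and> \<not> D \<omega>) = j110 + j010"
    using JA[of "\<lambda>a c d. c \<and> \<not> d"] by (simp add: UNIV_bool pdefs algebra_simps)
  have pr_nCD: "pr M (\<lambda>\<omega>. \<not> C \<omega> \<and> D \<omega>) = p101 + p001"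
    using PRA[of "\<lambda>a c d. \<not> c \<and> d"] by (simp add: UNIV_bool pdefs algebra_simps)
  have J_nCD: "JJ M Y (\<lambda>\<omega>. \<not> C \<omega> \<and> D \<omega>) = j101 + j001"
    using JA[of "\<lambda>a c d. \<not> c \<and> d"] by (simp add: UNIV_bool pdefs algebra_simps)
  have pr_nCnD: "pr M (\<lambda>\<omega>. \<not> C \<omega> \<and> \<not> D \<omega>) = p100 + p000"
    using PRA[of "\<lambda>a c d. \<not> c \<and> \<not> d"] by (simp add: UNIV_bool pdefs algebra_simps)
  have J_nCnD: "JJ M Y (\<lambda>\<omega>. \<not> C \<omega> \<and> \<not> D \<omega>) = j100 + j000"
    using JA[of "\<lambda>a c d. \<not> c \<and> \<not> d"] by (simp add: UNIV_bool pdefs algebra_simps)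
  have fp111: "(p111 + p110 + p011 + p010) * p111 = (p111 + p011) * (p111 + p110)"
    using FP[of True True True] by (simp add: pdefs pr_C pr_nC pr_CD pr_CnD pr_nCD pr_nCnD pr_AC pr_AnC pr_nAC pr_nAnC)
  have fj111: "(p111 + p110 + p011 + p010) * j111 = (p111 + p011) * (j111 + j110)"
    using FJ[of True True True] by (simp add: pdefs pr_C pr_nC pr_CD pr_CnD pr_nCD pr_nCnD J_AC J_AnC J_nAC J_nAnC)
  have fp110: "(p111 + p110 + p011 + p010) * p110 = (p110 + p010) * (p111 + p110)"
    using FP[of True True False] by (simp add: pdefs pr_C pr_nC pr_CD pr_CnD pr_nCD pr_nCnD pr_AC pr_AnC pr_nAC pr_nAnC)
  have fj110: "(p111 + p110 + p011 + p010) * j110 = (p110 + p010) * (j111 + j110)"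
    using FJ[of True True False] by (simp add: pdefs pr_C pr_nC pr_CD pr_CnD pr_nCD pr_nCnD J_AC J_AnC J_nAC J_nAnC)
  have fp101: "(p101 + p100 + p001 + p000) * p101 = (p101 + p001) * (p101 + p100)"
    using FP[of False True True] by (simp add: pdefs pr_C pr_nC pr_CD pr_CnD pr_nCD pr_nCnD pr_AC pr_AnC pr_nAC pr_nAnC)
  have fj101: "(p101 + p100 + p001 + p000) * j101 = (p101 + p001) * (j101 + j100)"
    using FJ[of False True True] by (simp add: pdefs pr_C pr_nC pr_CD pr_CnD pr_nCD pr_nCnD J_AC J_AnC J_nAC J_nAnC)
  have fp100: "(p101 + p100 + p001 + p000) * p100 = (p100 + p000) * (p101 + p100)"
    using FP[of False True False] by (simp add: pdefs pr_C pr_nC pr_CD pr_CnD pr_nCD pr_nCnD pr_AC pr_AnC pr_nAC pr_nAnC)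
  have fj100: "(p101 + p100 + p001 + p000) * j100 = (p100 + p000) * (j101 + j100)"
    using FJ[of False True False] by (simp add: pdefs pr_C pr_nC pr_CD pr_CnD pr_nCD pr_nCnD J_AC J_AnC J_nAC J_nAnC)
  have fp011: "(p111 + p110 + p011 + p010) * p011 = (p111 + p011) * (p011 + p010)"
    using FP[of True False True] by (simp add: pdefs pr_C pr_nC pr_CD pr_CnD pr_nCD pr_nCnD pr_AC pr_AnC pr_nAC pr_nAnC)
  have fj011: "(p111 + p110 + p011 + p010) * j011 = (p111 + p011) * (j011 + j010)"
    using FJ[of True False True] by (simp add: pdefs pr_C pr_nC pr_CD pr_CnD pr_nCD pr_nCnD J_AC J_AnC J_nAC J_nAnC)
  have fp010: "(p111 + p110 + p011 + p010) * p010 = (p110 + p010) * (p011 + p010)"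
    using FP[of True False False] by (simp add: pdefs pr_C pr_nC pr_CD pr_CnD pr_nCD pr_nCnD pr_AC pr_AnC pr_nAC pr_nAnC)
  have fj010: "(p111 + p110 + p011 + p010) * j010 = (p110 + p010) * (j011 + j010)"
    using FJ[of True False False] by (simp add: pdefs pr_C pr_nC pr_CD pr_CnD pr_nCD pr_nCnD J_AC J_AnC J_nAC J_nAnC)
  have fp001: "(p101 + p100 + p001 + p000) * p001 = (p101 + p001) * (p001 + p000)"
    using FP[of False False True] by (simp add: pdefs pr_C pr_nC pr_CD pr_CnD pr_nCD pr_nCnD pr_AC pr_AnC pr_nAC pr_nAnC)
  have fj001: "(p101 + p100 + p001 + p000) * j001 = (p101 + p001) * (j001 + j000)"
    using FJ[of False False True] by (simp add: pdefs pr_C pr_nC pr_CD pr_CnD pr_nCD pr_nCnD J_AC J_AnC J_nAC J_nAnC)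
  have fp000: "(p101 + p100 + p001 + p000) * p000 = (p100 + p000) * (p001 + p000)"
    using FP[of False False False] by (simp add: pdefs pr_C pr_nC pr_CD pr_CnD pr_nCD pr_nCnD pr_AC pr_AnC pr_nAC pr_nAnC)
  have fj000: "(p101 + p100 + p001 + p000) * j000 = (p100 + p000) * (j001 + j000)"
    using FJ[of False False False] by (simp add: pdefs pr_C pr_nC pr_CD pr_CnD pr_nCD pr_nCnD J_AC J_AnC J_nAC J_nAnC)

  have pr_T1: "pr M (\<lambda>\<omega>. True) = 1" unfolding pr_def ev_def by (simp add: prob_space)
  have pp: "p111 > 0" "p110 > 0" "p101 > 0" "p100 > 0" "p011 > 0" "p010 > 0" "p001 > 0" "p000 > 0"
    using pos[of True True True] pos[of True True False] pos[of True False True] pos[of True False False]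
      pos[of False True True] pos[of False True False] pos[of False False True] pos[of False False False]
    by (simp_all add: pdefs)
  have hC: "p111 + p110 + p011 + p010 = 1/2" using pc pr_C by simp
  have tot: "p111 + p110 + p101 + p100 + p011 + p010 + p001 + p000 = 1" using pr_T pr_T1 by simp
  have hnC: "p101 + p100 + p001 + p000 = 1/2" using hC tot by linarith
  have prnC: "pr M (\<lambda>\<omega>. \<not> C \<omega>) = 1/2" using hnC pr_nC by simp
  define a where "a = 2 * (p111 + p110)"
  define b where "b = 2 * (p001 + p000)"
  define q where "q = 2 * (p111 + p011)"
  define y1 where "y1 = (j111 + j110) / (p111 + p110)"
  define y2 where "y2 = (j101 + j100) / (p101 + p100)"
  define y3 where "y3 = (j011 + j010) / (p011 + p010)"
  define y4 where "y4 = (j001 + j000) / (p001 + p000)"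
  have sAC: "p111 + p110 = a/2" unfolding a_def by simp
  have snAnC: "p001 + p000 = b/2" unfolding b_def by simp
  have sAnC: "p101 + p100 = (1-b)/2" using hnC unfolding b_def by simp
  have snAC: "p011 + p010 = (1-a)/2" using hC unfolding a_def by simp
  have sCD: "p111 + p011 = q/2" unfolding q_def by simp
  have sCnD: "p110 + p010 = (1-q)/2" using hC unfolding q_def by simp
  have snCnD: "p100 + p000 = q/2"
  proof -
    have "(p111 + p011) / (p111 + p110 + p011 + p010) = (p100 + p000) / (1/2)" using pd prnC unfolding pr_CD pr_nCnD pr_C by simp
    thus ?thesis unfolding hC unfolding sCD by simp
  qed
  have snCD: "p101 + p001 = (1-q)/2" using hnC snCnD by simp
  have ha: "1/2 \<le> a"
  proof -
    have "(p111 + p110) / (p111 + p110 + p011 + p010) \<ge> 1/2" using pa2 unfolding pr_AC pr_C by simp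
    thus ?thesis unfolding hC unfolding sAC by simp
  qed
  have hab: "a \<le> b"
  proof -
    have "(p111 + p110) / (p111 + p110 + p011 + p010) \<le> (p001 + p000) / (1/2)" using pa prnC unfolding pr_AC pr_C pr_nAnC by simp
    thus ?thesis unfolding hC unfolding sAC snAnC by simp
  qed
  have hb: "b < 1" using sAnC pp by simp
  have hq: "1/2 \<le> q"
  proof -
    have "(p111 + p011) / (p111 + p110 + p011 + p010) \<ge> 1/2" using pd2 unfolding pr_CD pr_C by simp
    thus ?thesis unfolding hC unfolding sCD by simp
  qed
  have hq1: "q < 1" using sCnD pp by simp
  have jAC: "j111 + j110 = y1 * a / 2" unfolding y1_def sAC using ha by simp
  have jAnC: "j101 + j100 = y2 * (1-b) / 2" unfolding y2_def sAnC using hb by simp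
  have ha1: "a < 1" using snAC pp by simp
  have jnAC: "j011 + j010 = y3 * (1-a) / 2" unfolding y3_def snAC using ha1 by simp
  have jnAnC: "j001 + j000 = y4 * b / 2" unfolding y4_def snAnC using ha hab by simp
  have cAC: "condE M Y (\<lambda>\<omega>. A \<omega> \<and> C \<omega>) = y1" unfolding cond pr_AC J_AC y1_def ..
  have cAnC: "condE M Y (\<lambda>\<omega>. A \<omega> \<and> \<not> C \<omega>) = y2" unfolding cond pr_AnC J_AnC y2_def ..
  have cnAC: "condE M Y (\<lambda>\<omega>. \<not> A \<omega> \<and> C \<omega>) = y3" unfolding cond pr_nAC J_nAC y3_def ..
  have cnAnC: "condE M Y (\<lambda>\<omega>. \<not> A \<omega> \<and> \<not> C \<omega>) = y4" unfolding cond pr_nAnC J_nAnC y4_def ..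
  have RT: "RD_true M A C Y = y1*(1/2) + y2*(1/2) - y3*(1/2) - y4*(1/2)"
    unfolding RD_true_def cAC cAnC cnAC cnAnC prnC pc by simp
  have hh: "(x/2)/(u/2) = x/u" for x u :: real by simp
  have cA: "condE M Y A = (a*y1 + (1-b)*y2)/(a+(1-b))"
  proof -
    have X: "j111 + j110 + j101 + j100 = (a*y1 + (1-b)*y2)/2" using jAC jAnC by (simp add: field_simps)
    have Z: "p111 + p110 + p101 + p100 = (a+(1-b))/2" using sAC sAnC by (simp add: field_simps)
    show ?thesis unfolding cond pr_A J_A X Z by (rule hh)
  qed
  have cnA: "condE M Y (\<lambda>\<omega>. \<not> A \<omega>) = ((1-a)*y3 + b*y4)/((1-a)+b)"
  proof -
    have X: "j011 + j010 + j001 + j000 = ((1-a)*y3 + b*y4)/2" using jnAC jnAnC by (simp add: field_simps)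
    have Z: "p011 + p010 + p001 + p000 = ((1-a)+b)/2" using snAC snAnC by (simp add: field_simps)
    show ?thesis unfolding cond pr_nA J_nA X Z by (rule hh)
  qed
  have crude: "RD_crude M A Y \<ge> RD_true M A C Y"
    unfolding RT RD_crude_def cA cnA using crude_alg[OF ha hab hb ey[unfolded cAC cAnC cnAC cnAnC] ey2[unfolded cnAC cnAnC]] by simp
  have e111: "p111 = q*a/2" using fp111 unfolding hC unfolding sCD sAC by (simp add: field_simps)
  have e110: "p110 = (1-q)*a/2" using fp110 unfolding hC unfolding sCnD sAC by (simp add: field_simps)
  have e101: "p101 = (1-q)*(1-b)/2" using fp101 unfolding hnC unfolding snCD sAnC by (simp add: field_simps)
  have e100: "p100 = q*(1-b)/2" using fp100 unfolding hnC unfolding snCnD sAnC by (simp add: field_simps)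
  have e011: "p011 = q*(1-a)/2" using fp011 unfolding hC unfolding sCD snAC by (simp add: field_simps)
  have e010: "p010 = (1-q)*(1-a)/2" using fp010 unfolding hC unfolding sCnD snAC by (simp add: field_simps)
  have e001: "p001 = (1-q)*b/2" using fp001 unfolding hnC unfolding snCD snAnC by (simp add: field_simps)
  have e000: "p000 = q*b/2" using fp000 unfolding hnC unfolding snCnD snAnC by (simp add: field_simps)
  have f111: "j111 = q*a*y1/2" using fj111 unfolding hC unfolding sCD jAC by (simp add: field_simps)
  have f110: "j110 = (1-q)*a*y1/2" using fj110 unfolding hC unfolding sCnD jAC by (simp add: field_simps)
  have f101: "j101 = (1-q)*(1-b)*y2/2" using fj101 unfolding hnC unfolding snCD jAnC by (simp add: field_simps)
  have f100: "j100 = q*(1-b)*y2/2" using fj100 unfolding hnC unfolding snCnD jAnC by (simp add: field_simps)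
  have f011: "j011 = q*(1-a)*y3/2" using fj011 unfolding hC unfolding sCD jnAC by (simp add: field_simps)
  have f010: "j010 = (1-q)*(1-a)*y3/2" using fj010 unfolding hC unfolding sCnD jnAC by (simp add: field_simps)
  have f001: "j001 = (1-q)*b*y4/2" using fj001 unfolding hnC unfolding snCD jnAnC by (simp add: field_simps)
  have f000: "j000 = q*b*y4/2" using fj000 unfolding hnC unfolding snCnD jnAnC by (simp add: field_simps)
  have hf: "(x/2 + y/2) / (pu/2 + pv/2) = (x + y) / (pu + pv)" for x y pu pv :: real
  proof -
    have e: "x/2+y/2 = (x+y)/2" "pu/2+pv/2 = (pu+pv)/2" by (simp_all add: add_divide_distrib)
    show ?thesis unfolding e by (rule hh)
  qed
  have prD: "pr M D = 1/2" unfolding pr_D using sCD snCD by (simp add: algebra_simps) 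
  have prnD: "pr M (\<lambda>\<omega>. \<not> D \<omega>) = 1/2" unfolding pr_nD using sCnD snCnD by (simp add: algebra_simps)
  have RO: "RD_obs M A D Y =
         (q*a*y1 + (1-q)*(1-b)*y2)/(q*a+(1-q)*(1-b)) * (1/2)
       + ((1-q)*a*y1 + q*(1-b)*y2)/((1-q)*a+q*(1-b)) * (1/2)
       - (q*(1-a)*y3 + (1-q)*b*y4)/(q*(1-a)+(1-q)*b) * (1/2)
       - ((1-q)*(1-a)*y3 + q*b*y4)/((1-q)*(1-a)+q*b) * (1/2)"
    unfolding RD_obs_def RD_true_def prD prnD cond pr_AD J_AD pr_AnD J_AnD pr_nAD J_nAD pr_nAnD J_nAnD
      e111 e110 e101 e100 e011 e010 e001 e000 f111 f110 f101 f100 f011 f010 f001 f000 hf ..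
  have obs: "RD_obs M A D Y \<ge> RD_true M A C Y"
    unfolding RT RO using obs_alg[OF ha hab hb hq hq1 ey[unfolded cAC cAnC cnAC cnAnC] ey2[unfolded cnAC cnAnC]] .
  show ?thesis using crude obs by blast
qed

end
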